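(* Let $G$ be a profinite group satisfying the maximum condition on closed subgroups. The following are equivalent: (i) every isolated orbital closed subgroup of $G$ is normal in $G$; (ii) every orbital closed subgroup $K$ of $G$ contains a subgroup $N$ of finite index in $K$ which is normal in $G$.
   Context: A closed subgroup $K$ of a profinite group $G$ is orbital if $\mathbf{N}_G(K)$ is open in $G$. An orbital closed subgroup $H$ is isolated orbital if for every orbital closed subgroup $H'$ of $G$ with $H\lneq H'\le G$ we have $[H':H]=\infty$. *)

theory Defs
  imports "HOL-Analysis.Analysis" "HOL-Algebra.Algebra"
begin

definition topological_group :: "('a, 'b) monoid_scheme \<Rightarrow> 'a topology \<Rightarrow> bool" where
  "topological_group G T \<longleftrightarrow> group G \<and> topspace T = carrier G \<and>
     continuous_map (prod_topology T T) T (\<lambda>(x, y). x \<otimes>\<^bsub>G\<^esub> y) \<and>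
     continuous_map T T (\<lambda>x. inv\<^bsub>G\<^esub> x)"

definition profinite_group :: "('a, 'b) monoid_scheme \<Rightarrow> 'a topology \<Rightarrow> bool" where
  "profinite_group G T \<longleftrightarrow> topological_group G T \<and> compact_space T \<and> Hausdorff_space T \<and>
     (\<forall>x \<in> topspace T. connected_component_of_set T x = {x})"

definition closed_subgroup :: "('a, 'b) monoid_scheme \<Rightarrow> 'a topology \<Rightarrow> 'a set \<Rightarrow> bool" where
  "closed_subgroup G T K \<longleftrightarrow> subgroup K G \<and> closedin T K"

definition max_closed_subgroups :: "('a, 'b) monoid_scheme \<Rightarrow> 'a topology \<Rightarrow> bool" where
  "max_closed_subgroups G T \<longleftrightarrow>
     (\<forall>S. S \<noteq> {} \<and> (\<forall>K \<in> S. closed_subgroup G T K) \<longrightarrow>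
          (\<exists>M \<in> S. \<forall>K \<in> S. M \<subseteq> K \<longrightarrow> K = M))"

text \<open>Index [H' : H] is finite, for H \<subseteq> H': finitely many right cosets of H meet H'.\<close>
definition finite_index_in :: "('a, 'b) monoid_scheme \<Rightarrow> 'a set \<Rightarrow> 'a set \<Rightarrow> bool" where
  "finite_index_in G H H' \<longleftrightarrow> finite ((\<lambda>h. H #>\<^bsub>G\<^esub> h) ` H')"

definition orbital :: "('a, 'b) monoid_scheme \<Rightarrow> 'a topology \<Rightarrow> 'a set \<Rightarrow> bool" where
  "orbital G T K \<longleftrightarrow> closed_subgroup G T K \<and> openin T (normalizer G K)"

definition isolated_orbital :: "('a, 'b) monoid_scheme \<Rightarrow> 'a topology \<Rightarrow> 'a set \<Rightarrow> bool" where
  "isolated_orbital G T H \<longleftrightarrow> orbital G T H \<and>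
     (\<forall>H'. orbital G T H' \<and> H \<subset> H' \<longrightarrow> \<not> finite_index_in G H H')"

end

theory Submission
  imports Defs
begin


definition lprod :: "('a,'b) monoid_scheme \<Rightarrow> 'a list \<Rightarrow> 'a" where
  "lprod G w = foldr (\<lambda>x y. x \<otimes>\<^bsub>G\<^esub> y) w \<one>\<^bsub>G\<^esub>"

context group begin

lemma lprod_simps[simp]: "lprod G [] = \<one>" "lprod G (a # w) = a \<otimes> lprod G w"
  by (simp_all add: lprod_def)

lemma lprod_closed[simp]: "set w \<subseteq> carrier G \<Longrightarrow> lprod G w \<in> carrier G"
  by (induction w) auto

lemma lprod_append: "set v \<subseteq> carrier G \<Longrightarrow> set w \<subseteq> carrier G \<Longrightarrow>
   lprod G (v @ w) = lprod G v \<otimes> lprod G w"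
  by (induction v) (auto simp: m_assoc)

lemma lprod_replicate: "s \<in> carrier G \<Longrightarrow> lprod G (replicate n s) = s [^] n"
proof (induction n)
  case (Suc n) then show ?case using nat_pow_Suc2[of s n] by simp
qed simp

lemma lprod_inv: "set w \<subseteq> carrier G \<Longrightarrow> inv (lprod G w) = lprod G (rev (map (\<lambda>x. inv x) w))"
proof (induction w)
  case (Cons a w)
  have "set (rev (map (\<lambda>x. inv x) w)) \<subseteq> carrier G" using Cons.prems by auto
  then show ?case using Cons by (auto simp: lprod_append inv_mult_group)
qed simp

lemma generate_lprod:
  assumes S: "S \<subseteq> carrier G" and invS: "\<forall>s\<in>S. inv s \<in> S"
  shows "x \<in> generate G S \<Longrightarrow> \<exists>w. set w \<subseteq> S \<and> x = lprod G w"
proof (induction rule: generate.induct)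
  case one then show ?case by (intro exI[of _ "[]"]) auto
next
  case (incl h) then show ?case by (intro exI[of _ "[h]"]) (use S in auto)
next
  case (inv h) then show ?case by (intro exI[of _ "[inv h]"]) (use S invS in auto)
next
  case (eng h1 h2)
  then obtain v w where "set v \<subseteq> S" "h1 = lprod G v" "set w \<subseteq> S" "h2 = lprod G w" by blast
  then show ?case using S by (intro exI[of _ "v @ w"]) (auto simp: lprod_append)
qed

lemma collect_letter:
  assumes S: "S \<subseteq> carrier G" and conj: "\<forall>g\<in>carrier G. \<forall>s\<in>S. g \<otimes> s \<otimes> inv g \<in> S"
    and s: "s \<in> S"
  shows "set w \<subseteq> S \<Longrightarrow> \<exists>w'. set w' \<subseteq> S \<and> length w' + count_list w s = length w \<and>
            lprod G w = s [^] count_list w s \<otimes> lprod G w'"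
proof (induction w)
  case Nil then show ?case by (intro exI[of _ "[]"]) auto
next
  case (Cons a w)
  then obtain w' where w': "set w' \<subseteq> S" "length w' + count_list w s = length w"
     "lprod G w = s [^] count_list w s \<otimes> lprod G w'" by auto
  have a: "a \<in> S" "a \<in> carrier G" using Cons.prems S by auto
  have sc: "s \<in> carrier G" using s S by auto
  have w'c: "set w' \<subseteq> carrier G" using w' S by auto
  show ?case
  proof (cases "a = s")
    case True
    then show ?thesis using w' sc w'c
      by (intro exI[of _ w']) (auto simp: m_assoc[symmetric] nat_pow_Suc2[symmetric])
  next
    case False
    let ?c = "count_list w s"
    define b where "b = inv (s [^] ?c) \<otimes> a \<otimes> inv (inv (s [^] ?c))"
    have bS: "b \<in> S" unfolding b_def by (rule conj[rule_format]) (use a sc in auto)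
    have "lprod G (a # w) = a \<otimes> (s [^] ?c \<otimes> lprod G w')" using w' by simp
    also have "\<dots> = s [^] ?c \<otimes> (b \<otimes> lprod G w')"
      unfolding b_def using a sc w'c by (simp add: m_assoc[symmetric])
    finally show ?thesis using False w' bS
      by (intro exI[of _ "b # w'"]) auto
  qed
qed

lemma dietzmann:
  assumes S: "S \<subseteq> carrier G" and fin: "finite S" and invS: "\<forall>s\<in>S. inv s \<in> S"
    and powS: "\<forall>s\<in>S. \<forall>n::nat. s [^] n \<in> S"
    and conj: "\<forall>g\<in>carrier G. \<forall>s\<in>S. g \<otimes> s \<otimes> inv g \<in> S"
  shows "finite (generate G S)"
proof -
  have tors: "\<exists>m::nat. m > 0 \<and> s [^] m = \<one>" if s: "s \<in> S" for s
  proof -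
    have sc: "s \<in> carrier G" using s S by auto
    have "range (\<lambda>n::nat. s [^] n) \<subseteq> S" using powS s by auto
    then have "finite (range (\<lambda>n::nat. s [^] n))" using fin finite_subset by blast
    then have "\<not> inj (\<lambda>n::nat. s [^] n)" using finite_imageD by blast
    then obtain i j :: nat where ij: "i \<noteq> j" "s [^] i = s [^] j" unfolding inj_def by blast
    have key: "s [^] (j - i) = \<one>" if "i < j" "s [^] i = s [^] j" for i j :: nat
    proof -
      have "s [^] i \<otimes> s [^] (j - i) = s [^] j"
        using nat_pow_mult[OF sc, of i "j-i"] that(1) by simp
      then have "s [^] i \<otimes> \<one> = s [^] i \<otimes> s [^] (j - i)" using that(2) sc by (simp only: r_one nat_pow_closed)
      then show ?thesis using sc by (metis l_cancel_one' nat_pow_closed one_closed r_one)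
    qed
    show ?thesis
    proof (cases "i < j")
      case True
      have "0 < j - i" using True by simp
      then show ?thesis using key[OF True ij(2)] by blast
    next
      case False then have "j < i" using ij by auto
      then have "0 < i - j" "s [^] (i - j) = \<one>" using key[of j i] ij by auto
      then show ?thesis by blast
    qed
  qed
  define ordS where "ordS s = (SOME m::nat. m > 0 \<and> s [^] m = \<one>)" for s
  have ordS: "ordS s > 0 \<and> s [^] ordS s = \<one>" if "s \<in> S" for s
    unfolding ordS_def using someI_ex[OF tors[OF that]] .
  define B where "B = sum ordS S"
  have short: "\<exists>w. set w \<subseteq> S \<and> x = lprod G w \<and> length w \<le> B" if x: "x \<in> generate G S" for x
  proof -
    define P where "P n = (\<exists>w. set w \<subseteq> S \<and> x = lprod G w \<and> length w = n)" for n
    have "\<exists>n. P n" using generate_lprod[OF S invS x] unfolding P_def by blast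
    then obtain n where Pn: "P n" and least: "\<And>k. P k \<Longrightarrow> n \<le> k"
      by (metis ex_least_nat_le le_refl not_le)
    then obtain w where w: "set w \<subseteq> S" "x = lprod G w" "length w = n" unfolding P_def by blast
    have cnt: "count_list w s < ordS s" if s: "s \<in> S" for s
    proof (rule ccontr)
      assume "\<not> count_list w s < ordS s"
      then have ge: "ordS s \<le> count_list w s" by simp
      obtain w' where w': "set w' \<subseteq> S" "length w' + count_list w s = length w"
        "lprod G w = s [^] count_list w s \<otimes> lprod G w'"
        using collect_letter[OF S conj s w(1)] by blast
      have sc: "s \<in> carrier G" using s S by auto
      have w'c: "set w' \<subseteq> carrier G" using w' S by auto
      let ?v = "replicate (count_list w s - ordS s) s @ w'"
      have "s [^] count_list w s = s [^] (count_list w s - ordS s) \<otimes> s [^] ordS s"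
        using ge sc by (simp add: nat_pow_mult)
      also have "\<dots> = s [^] (count_list w s - ordS s)" using ordS[OF s] sc by simp
      finally have pw: "s [^] count_list w s = s [^] (count_list w s - ordS s)" .
      moreover have "set (replicate (count_list w s - ordS s) s) \<subseteq> carrier G" using sc by auto
      ultimately have "lprod G w = lprod G ?v"
        using w' sc w'c lprod_append[of "replicate (count_list w s - ordS s) s" w']
        by (simp add: lprod_replicate)
      moreover have "set ?v \<subseteq> S" using w' s by auto
      moreover have "length ?v < n" using w' ge ordS[OF s] w(3) by auto
      ultimately have "P (length ?v)" unfolding P_def using w by (intro exI[of _ ?v]) simp
      then show False using least \<open>length ?v < n\<close> by fastforce
    qed
    have "length w = sum (count_list w) S" using sum_count_set[OF w(1) fin] by simp
    also have "\<dots> \<le> B" unfolding B_def using cnt by (intro sum_mono) (auto intro: less_imp_le)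
    finally show ?thesis using w by blast
  qed
  have "generate G S \<subseteq> lprod G ` {w. set w \<subseteq> S \<and> length w \<le> B}" using short by blast
  moreover have "finite (lprod G ` {w. set w \<subseteq> S \<and> length w \<le> B})"
    using finite_lists_length_le[OF fin] by blast
  ultimately show ?thesis using finite_subset by blast
qed

end

lemma finite_image_factor:
  assumes "finite (q ` A)" and "\<And>x y. x \<in> A \<Longrightarrow> y \<in> A \<Longrightarrow> q x = q y \<Longrightarrow> f x = f y"
  shows "finite (f ` A)"
proof -
  have "f ` A = (\<lambda>b. f (SOME x. x \<in> A \<and> q x = b)) ` (q ` A)"
  proof (rule subset_antisym; rule subsetI)
    fix z assume "z \<in> f ` A"
    then obtain x where x: "x \<in> A" "z = f x" by blast
    have "(SOME y. y \<in> A \<and> q y = q x) \<in> A \<and> q (SOME y. y \<in> A \<and> q y = q x) = q x"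
      by (rule someI_ex) (use x in blast)
    then have "f (SOME y. y \<in> A \<and> q y = q x) = f x" using assms(2) x by blast
    then show "z \<in> (\<lambda>b. f (SOME x. x \<in> A \<and> q x = b)) ` (q ` A)" using x by force
  next
    fix z assume "z \<in> (\<lambda>b. f (SOME x. x \<in> A \<and> q x = b)) ` (q ` A)"
    then obtain x where x: "x \<in> A" "z = f (SOME y. y \<in> A \<and> q y = q x)" by blast
    have "(SOME y. y \<in> A \<and> q y = q x) \<in> A \<and> q (SOME y. y \<in> A \<and> q y = q x) = q x"
      by (rule someI_ex) (use x in blast)
    then show "z \<in> f ` A" using x by blast
  qed
  then show ?thesis using assms(1) by simp
qed

context group begin

lemma rcos_mem_iff:
  assumes A: "subgroup A G" and c: "c \<in> carrier G"
  shows "x \<in> A #> c \<longleftrightarrow> x \<in> carrier G \<and> x \<otimes> inv c \<in> A"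
proof
  assume "x \<in> A #> c"
  then obtain a where a: "a \<in> A" "x = a \<otimes> c" unfolding r_coset_def by auto
  have ac: "a \<in> carrier G" by (rule subgroup.mem_carrier[OF A a(1)])
  have "x \<otimes> inv c = a" unfolding a(2) using ac c by (simp add: m_assoc)
  moreover have "x \<in> carrier G" unfolding a(2) using ac c by (rule m_closed)
  ultimately show "x \<in> carrier G \<and> x \<otimes> inv c \<in> A" using a(1) by simp
next
  assume x: "x \<in> carrier G \<and> x \<otimes> inv c \<in> A"
  have e: "(x \<otimes> inv c) \<otimes> c = x" using x c by (simp add: m_assoc)
  have "(x \<otimes> inv c) \<otimes> c \<in> A #> c" unfolding r_coset_def using x by auto
  then show "x \<in> A #> c" unfolding e .
qed

lemma conj_img:
  assumes "H \<subseteq> carrier G" "g \<in> carrier G"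
  shows "g <# H #> inv g = (\<lambda>h. g \<otimes> h \<otimes> inv g) ` H"
  unfolding l_coset_def r_coset_def by auto

lemma lr_img:
  assumes "H \<subseteq> carrier G" "g \<in> carrier G" "c \<in> carrier G"
  shows "g <# H #> c = (\<lambda>h. g \<otimes> h \<otimes> c) ` H"
  unfolding l_coset_def r_coset_def by auto

lemma r_img: "H #> c = (\<lambda>h. h \<otimes> c) ` H"
  unfolding r_coset_def by auto

lemma conj_subset: "H \<subseteq> carrier G \<Longrightarrow> g \<in> carrier G \<Longrightarrow> g <# H #> inv g \<subseteq> carrier G"
  using conj_img by auto


lemma inv_cancel_l[simp]: "g \<in> carrier G \<Longrightarrow> x \<in> carrier G \<Longrightarrow> inv g \<otimes> (g \<otimes> x) = x"
  by (simp add: m_assoc[symmetric])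

lemma inv_cancel_l'[simp]: "g \<in> carrier G \<Longrightarrow> x \<in> carrier G \<Longrightarrow> g \<otimes> (inv g \<otimes> x) = x"
  by (simp add: m_assoc[symmetric])

lemma conj_mult_eq:
  "g \<in> carrier G \<Longrightarrow> a \<in> carrier G \<Longrightarrow> b \<in> carrier G \<Longrightarrow>
   (g \<otimes> a \<otimes> inv g) \<otimes> (g \<otimes> b \<otimes> inv g) = g \<otimes> (a \<otimes> b) \<otimes> inv g"
  by (simp add: m_assoc)

lemma conj_inv_eq:
  "g \<in> carrier G \<Longrightarrow> a \<in> carrier G \<Longrightarrow> inv (g \<otimes> a \<otimes> inv g) = g \<otimes> inv a \<otimes> inv g"
  by (simp add: inv_mult_group m_assoc)

lemma conj_subgroup:
  assumes H: "subgroup H G" and g: "g \<in> carrier G"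
  shows "subgroup (g <# H #> inv g) G"
proof -
  have Hc: "H \<subseteq> carrier G" using H subgroup.subset by auto
  show ?thesis unfolding conj_img[OF Hc g]
  proof (rule subgroupI)
    show "(\<lambda>h. g \<otimes> h \<otimes> inv g) ` H \<subseteq> carrier G" using Hc g by auto
    show "(\<lambda>h. g \<otimes> h \<otimes> inv g) ` H \<noteq> {}" using subgroup.one_closed[OF H] by auto
  next
    fix a assume "a \<in> (\<lambda>h. g \<otimes> h \<otimes> inv g) ` H"
    then obtain h where h: "h \<in> H" "a = g \<otimes> h \<otimes> inv g" by auto
    then have "inv a = g \<otimes> inv h \<otimes> inv g" using Hc g conj_inv_eq by auto
    then show "inv a \<in> (\<lambda>h. g \<otimes> h \<otimes> inv g) ` H" using h subgroup.m_inv_closed[OF H] by auto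
  next
    fix a b assume "a \<in> (\<lambda>h. g \<otimes> h \<otimes> inv g) ` H" "b \<in> (\<lambda>h. g \<otimes> h \<otimes> inv g) ` H"
    then obtain h k where hk: "h \<in> H" "a = g \<otimes> h \<otimes> inv g" "k \<in> H" "b = g \<otimes> k \<otimes> inv g" by auto
    have "h \<in> carrier G" "k \<in> carrier G" using hk Hc by auto
    then have "a \<otimes> b = g \<otimes> (h \<otimes> k) \<otimes> inv g" using hk g conj_mult_eq by auto
    then show "a \<otimes> b \<in> (\<lambda>h. g \<otimes> h \<otimes> inv g) ` H" using hk subgroup.m_closed[OF H] by auto
  qed
qed

lemma conj_conj:
  assumes "H \<subseteq> carrier G" "g \<in> carrier G" "a \<in> carrier G"
  shows "g <# (a <# H #> inv a) #> inv g = (g \<otimes> a) <# H #> inv (g \<otimes> a)"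
proof -
  have "a <# H #> inv a \<subseteq> carrier G" using conj_subset assms by auto
  then have "g <# (a <# H #> inv a) #> inv g = (\<lambda>h. g \<otimes> (a \<otimes> h \<otimes> inv a) \<otimes> inv g) ` H"
    using assms by (simp add: conj_img image_image)
  also have "\<dots> = (\<lambda>h. (g \<otimes> a) \<otimes> h \<otimes> inv (g \<otimes> a)) ` H"
    using assms by (intro image_cong) (auto simp: m_assoc inv_mult_group)
  also have "\<dots> = (g \<otimes> a) <# H #> inv (g \<otimes> a)" using assms by (simp add: conj_img)
  finally show ?thesis .
qed

lemma conj_one: "H \<subseteq> carrier G \<Longrightarrow> \<one> <# H #> inv \<one> = H"
  by (simp add: lcos_mult_one)

lemma normalizer_conj:
  assumes "H \<subseteq> carrier G" "m \<in> normalizer G H"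
  shows "m \<in> carrier G \<and> m <# H #> inv m = H"
  using assms unfolding normalizer_def stabilizer_def by auto

lemma normal_normalizer:
  assumes "H \<lhd> G" shows "normalizer G H = carrier G"
proof -
  have Hc: "H \<subseteq> carrier G" using assms normal_imp_subgroup subgroup.subset by metis
  have "g <# H #> inv g = H" if g: "g \<in> carrier G" for g
  proof -
    have "(\<lambda>h. g \<otimes> h \<otimes> inv g) ` H = H"
    proof
      show "(\<lambda>h. g \<otimes> h \<otimes> inv g) ` H \<subseteq> H" using normal.inv_op_closed2[OF assms g] by auto
      show "H \<subseteq> (\<lambda>h. g \<otimes> h \<otimes> inv g) ` H"
      proof
        fix h assume h: "h \<in> H"
        have hc: "h \<in> carrier G" using h Hc by auto
        have "h = g \<otimes> (inv g \<otimes> h \<otimes> g) \<otimes> inv g" using hc g by (simp add: m_assoc)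
        then show "h \<in> (\<lambda>h. g \<otimes> h \<otimes> inv g) ` H" using normal.inv_op_closed1[OF assms g h] by (rule image_eqI)
      qed
    qed
    then show ?thesis using conj_img[OF Hc g] by simp
  qed
  then show ?thesis unfolding normalizer_def stabilizer_def using Hc by auto
qed

lemma gen_conj:
  assumes S: "S \<subseteq> carrier G" and conj: "\<forall>g\<in>carrier G. \<forall>s\<in>S. g \<otimes> s \<otimes> inv g \<in> S"
    and g: "g \<in> carrier G"
  shows "x \<in> generate G S \<Longrightarrow> g \<otimes> x \<otimes> inv g \<in> generate G S"
proof (induction rule: generate.induct)
  case one
  have "g \<otimes> \<one> \<otimes> inv g = \<one>" using g by simp
  then show ?case using generate.one by metis
next
  case (incl h) then show ?case using conj g generate.incl by metis
next
  case (inv h)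
  have hc: "h \<in> carrier G" using inv S by auto
  have "g \<otimes> inv h \<otimes> inv g = inv (g \<otimes> h \<otimes> inv g)" using hc g conj_inv_eq by simp
  moreover have "g \<otimes> h \<otimes> inv g \<in> S" using conj g inv by auto
  ultimately show ?case using generate.inv by metis
next
  case (eng h1 h2)
  have "h1 \<in> carrier G" "h2 \<in> carrier G" using eng generate_in_carrier S by auto
  then have "g \<otimes> (h1 \<otimes> h2) \<otimes> inv g = (g \<otimes> h1 \<otimes> inv g) \<otimes> (g \<otimes> h2 \<otimes> inv g)"
    using g conj_mult_eq by simp
  then show ?case using eng generate.eng by metis
qed

lemma fi_trans:
  assumes K: "subgroup K G" and H: "subgroup H G" and H': "subgroup H' G"
    and KH: "K \<subseteq> H" and HH': "H \<subseteq> H'"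
    and f1: "finite_index_in G K H" and f2: "finite_index_in G H H'"
  shows "finite_index_in G K H'"
proof -
  define rep where "rep R = (SOME r. r \<in> H' \<and> H #> r = R)" for R
  have "(\<lambda>x. K #> x) ` H' \<subseteq> (\<lambda>(Z, R). Z #> rep R) ` ((\<lambda>h. K #> h) ` H \<times> (\<lambda>x. H #> x) ` H')"
  proof
    fix Y assume "Y \<in> (\<lambda>x. K #> x) ` H'"
    then obtain x where x: "x \<in> H'" "Y = K #> x" by auto
    have xc: "x \<in> carrier G" using x subgroup.mem_carrier[OF H'] by auto
    have r: "rep (H #> x) \<in> H' \<and> H #> rep (H #> x) = H #> x"
      unfolding rep_def by (rule someI_ex) (use x in auto)
    define r where "r = rep (H #> x)"
    have rc: "r \<in> carrier G" using r r_def subgroup.mem_carrier[OF H'] by auto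
    have "x \<in> H #> r" using rcos_self[OF xc H] r r_def by simp
    then obtain h where h: "h \<in> H" "x = h \<otimes> r" unfolding r_coset_def by auto
    have hc: "h \<in> carrier G" using h subgroup.mem_carrier[OF H] by auto
    have Kc: "K \<subseteq> carrier G" using K subgroup.subset by auto
    have "Y = (K #> h) #> r" using x h coset_mult_assoc[OF Kc hc rc] by simp
    then show "Y \<in> (\<lambda>(Z, R). Z #> rep R) ` ((\<lambda>h. K #> h) ` H \<times> (\<lambda>x. H #> x) ` H')"
      using h x r_def by force
  qed
  moreover have "finite ((\<lambda>h. K #> h) ` H \<times> (\<lambda>x. H #> x) ` H')"
    using f1 f2 unfolding finite_index_in_def by simp
  ultimately show ?thesis unfolding finite_index_in_def by (meson finite_imageI finite_subset)
qed

lemma fi_conj: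
  assumes K: "subgroup K G" and H: "H \<lhd> G"
    and f: "finite_index_in G K H" and g: "g \<in> carrier G"
  shows "finite_index_in G (g <# K #> inv g) H"
proof -
  have Kc: "K \<subseteq> carrier G" using K subgroup.subset by auto
  have Hc: "H \<subseteq> carrier G" using H normal_imp_subgroup subgroup.subset by metis
  have "(\<lambda>h. (g <# K #> inv g) #> h) ` H \<subseteq> (\<lambda>Z. g <# Z #> inv g) ` ((\<lambda>h. K #> h) ` H)"
  proof
    fix Y assume "Y \<in> (\<lambda>h. (g <# K #> inv g) #> h) ` H"
    then obtain h where h: "h \<in> H" "Y = (g <# K #> inv g) #> h" by auto
    have hc: "h \<in> carrier G" using h Hc by auto
    define h' where "h' = inv g \<otimes> h \<otimes> g"
    have h'H: "h' \<in> H" unfolding h'_def using normal.inv_op_closed1[OF H g h(1)] .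
    have h'c: "h' \<in> carrier G" using h'H Hc by auto
    have "Y = ((\<lambda>k. g \<otimes> k \<otimes> inv g) ` K) #> h"
      using h(2) conj_img[OF Kc g] by simp
    also have "\<dots> = (\<lambda>k. g \<otimes> k \<otimes> inv g \<otimes> h) ` K"
      by (simp only: r_img image_image)
    also have "\<dots> = (\<lambda>k. g \<otimes> (k \<otimes> h') \<otimes> inv g) ` K"
      unfolding h'_def using Kc g hc by (intro image_cong) (auto simp: m_assoc)
    also have "\<dots> = g <# (K #> h') #> inv g"
      using conj_img[of "K #> h'" g] g r_coset_subset_G[OF Kc h'c] by (simp add: r_img image_image)
    finally show "Y \<in> (\<lambda>Z. g <# Z #> inv g) ` ((\<lambda>h. K #> h) ` H)" using h'H by auto
  qed
  then show ?thesis using f unfolding finite_index_in_def by (meson finite_imageI finite_subset)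
qed

lemma fi_Inter:
  assumes C: "finite C" "C \<noteq> {}" "\<And>A. A \<in> C \<Longrightarrow> subgroup A G"
    and Hc: "H \<subseteq> carrier G" and f: "\<And>A. A \<in> C \<Longrightarrow> finite_index_in G A H"
  shows "finite_index_in G (\<Inter>C) H"
proof -
  have N: "subgroup (\<Inter>C) G" using subgroups_Inter C by auto
  have eq: "\<Inter>C #> h = (\<lambda>\<phi>. \<Inter>(\<phi> ` C)) (restrict (\<lambda>A. A #> h) C)" if h: "h \<in> carrier G" for h
  proof -
    have "x \<in> \<Inter>C #> h \<longleftrightarrow> (\<forall>A\<in>C. x \<in> A #> h)" for x
      using rcos_mem_iff[OF N h] rcos_mem_iff[OF C(3) h] C(2) by auto
    then show ?thesis by auto
  qed
  have "(\<lambda>h. \<Inter>C #> h) ` H \<subseteq> (\<lambda>\<phi>. \<Inter>(\<phi> ` C)) ` (\<Pi>\<^sub>E A\<in>C. (\<lambda>h. A #> h) ` H)"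
  proof
    fix Y assume "Y \<in> (\<lambda>h. \<Inter>C #> h) ` H"
    then obtain h where h: "h \<in> H" "Y = \<Inter>C #> h" by auto
    then have "Y = (\<lambda>\<phi>. \<Inter>(\<phi> ` C)) (restrict (\<lambda>A. A #> h) C)" using eq Hc by auto
    moreover have "restrict (\<lambda>A. A #> h) C \<in> (\<Pi>\<^sub>E A\<in>C. (\<lambda>h. A #> h) ` H)" using h by auto
    ultimately show "Y \<in> (\<lambda>\<phi>. \<Inter>(\<phi> ` C)) ` (\<Pi>\<^sub>E A\<in>C. (\<lambda>h. A #> h) ` H)" by (rule rev_image_eqI[rotated])
  qed
  moreover have "finite (\<Pi>\<^sub>E A\<in>C. (\<lambda>h. A #> h) ` H)"
    using f C(1) unfolding finite_index_in_def by (intro finite_PiE) auto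
  ultimately show ?thesis unfolding finite_index_in_def by (meson finite_imageI finite_subset)
qed


end
lemma topgrp_group: "topological_group G T \<Longrightarrow> group G"
  unfolding topological_group_def by auto

lemma topgrp_rmult:
  assumes TG: "topological_group G T" and c: "c \<in> carrier G"
  shows "continuous_map T T (\<lambda>x. x \<otimes>\<^bsub>G\<^esub> c)"
proof -
  have top: "topspace T = carrier G" and mult: "continuous_map (prod_topology T T) T (\<lambda>(x, y). x \<otimes>\<^bsub>G\<^esub> y)"
    using TG unfolding topological_group_def by auto
  have "continuous_map T (prod_topology T T) (\<lambda>x. (x, c))"
    unfolding continuous_map_pairwise using c top by (simp add: o_def)
  from continuous_map_compose[OF this mult] show ?thesis by (simp add: o_def)
qed

context group begin

lemma rcos_preimage:
  assumes TG: "topological_group G T" and H: "subgroup H G" and c: "c \<in> carrier G"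
  shows "H #>\<^bsub>G\<^esub> c = {x \<in> topspace T. x \<otimes>\<^bsub>G\<^esub> inv\<^bsub>G\<^esub> c \<in> H}"
proof -
  have top: "topspace T = carrier G" using TG unfolding topological_group_def by auto
  show ?thesis using rcos_mem_iff[OF H c] top by auto
qed

lemma rcos_closedin:
  assumes TG: "topological_group G T" and H: "subgroup H G" and cl: "closedin T H" and c: "c \<in> carrier G"
  shows "closedin T (H #>\<^bsub>G\<^esub> c)"
proof -
  show ?thesis unfolding rcos_preimage[OF TG H c]
    by (rule closedin_continuous_map_preimage[OF topgrp_rmult[OF TG] cl]) (use c in simp)
qed

lemma rcos_openin:
  assumes TG: "topological_group G T" and H: "subgroup H G" and op: "openin T H" and c: "c \<in> carrier G"
  shows "openin T (H #>\<^bsub>G\<^esub> c)"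
proof -
  show ?thesis unfolding rcos_preimage[OF TG H c]
    by (rule openin_continuous_map_preimage[OF topgrp_rmult[OF TG] op]) (use c in simp)
qed

lemma finite_rcosets_open:
  assumes TG: "topological_group G T" and cpt: "compact_space T"
    and M: "subgroup M G" and op: "openin T M"
  shows "finite ((\<lambda>x. M #>\<^bsub>G\<^esub> x) ` carrier G)"
proof -
  have top: "topspace T = carrier G" using TG unfolding topological_group_def by auto
  let ?U = "(\<lambda>x. M #> x) ` carrier G"
  have "\<forall>U\<in>?U. openin T U" using rcos_openin[OF TG M op] by auto
  moreover have "topspace T \<subseteq> \<Union>?U" using rcos_self[OF _ M] top by auto
  ultimately obtain F where F: "finite F" "F \<subseteq> ?U" "topspace T \<subseteq> \<Union>F"
    using cpt unfolding compact_space_alt by meson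
  have "?U \<subseteq> F"
  proof
    fix A assume "A \<in> ?U"
    then obtain x where x: "x \<in> carrier G" "A = M #> x" by auto
    then obtain B where B: "B \<in> F" "x \<in> B" using F(3) top by auto
    then obtain y where y: "y \<in> carrier G" "B = M #> y" using F(2) by auto
    have "M #> y = M #> x" using repr_independence[of x M y] B y M by simp
    then show "A \<in> F" using x y B by simp
  qed
  then show ?thesis using F(1) finite_subset by auto
qed

lemma finite_conjugates:
  assumes TG: "topological_group G T" and cpt: "compact_space T"
    and H: "subgroup H G" and op: "openin T (normalizer G H)"
  shows "finite ((\<lambda>g. g <#\<^bsub>G\<^esub> H #>\<^bsub>G\<^esub> inv\<^bsub>G\<^esub> g) ` carrier G)"
proof -
  let ?M = "normalizer G H"
  have Hc: "H \<subseteq> carrier G" using H subgroup.subset by auto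
  have M: "subgroup ?M G" using normalizer_imp_subgroup[OF Hc] .
  have fin: "finite ((\<lambda>x. ?M #> x) ` carrier G)" using finite_rcosets_open[OF TG cpt M op] .
  have "(\<lambda>g. ?M #> inv g) ` carrier G \<subseteq> (\<lambda>x. ?M #> x) ` carrier G" by auto
  then have fin2: "finite ((\<lambda>g. ?M #> inv g) ` carrier G)" using fin finite_subset by auto
  show ?thesis
  proof (rule finite_image_factor[OF fin2])
    fix g g' assume g: "g \<in> carrier G" and g': "g' \<in> carrier G" and eq: "?M #> inv g = ?M #> inv g'"
    have "inv g \<in> ?M #> inv g'" using eq rcos_self[OF _ M, of "inv g"] g by simp
    then obtain m where m: "m \<in> ?M" "inv g = m \<otimes> inv g'" unfolding r_coset_def by auto
    have mc: "m \<in> carrier G" using m subgroup.mem_carrier[OF M] by auto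
    have im: "inv m \<in> ?M" using subgroup.m_inv_closed[OF M m(1)] .
    have gg: "g = g' \<otimes> inv m"
    proof -
      have "inv (inv g) = inv (m \<otimes> inv g')" using m by simp
      then show ?thesis using g g' mc by (simp add: inv_mult_group)
    qed
    have "g <# H #> inv g = g' <# (inv m <# H #> inv (inv m)) #> inv g'"
      using conj_conj[OF Hc g' inv_closed[OF mc]] gg by simp
    also have "\<dots> = g' <# H #> inv g'" using normalizer_conj[OF Hc im] by simp
    finally show "g <# H #> inv g = g' <# H #> inv g'" .
  qed
qed

end
context group begin

lemma subgroup_pow_closed:
  assumes A: "subgroup A G" and a: "a \<in> A"
  shows "a [^] (n::nat) \<in> A"
proof (induction n)
  case 0 then show ?case using subgroup.one_closed[OF A] by simp
next
  case (Suc n) then show ?case using subgroup.m_closed[OF A Suc a] by simp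
qed

lemma setmult_subgroup_eq:
  assumes H: "subgroup H G" and N: "subgroup N G" and NH: "N \<subseteq> H"
  shows "H <#> N = H"
proof
  show "H <#> N \<subseteq> H"
  proof
    fix y assume "y \<in> H <#> N"
    then obtain h n where hn: "h \<in> H" "n \<in> N" "y = h \<otimes> n" unfolding set_mult_def by auto
    then show "y \<in> H" using subgroup.m_closed[OF H hn(1)] NH by auto
  qed
  show "H \<subseteq> H <#> N"
  proof
    fix h assume h: "h \<in> H"
    have "h = h \<otimes> \<one>" using h subgroup.mem_carrier[OF H] by simp
    then show "h \<in> H <#> N" unfolding set_mult_def using h subgroup.one_closed[OF N] by auto
  qed
qed

lemma dirA:
  assumes TG: "topological_group G T" and cpt: "compact_space T" and mx: "max_closed_subgroups G T"
    and I: "\<forall>H. isolated_orbital G T H \<longrightarrow> H \<lhd> G" and K: "orbital G T K"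
  shows "\<exists>N. N \<subseteq> K \<and> subgroup N G \<and> finite_index_in G N K \<and> N \<lhd> G"
proof -
  have Ksub: "subgroup K G" and Kop: "openin T (normalizer G K)"
    using K unfolding orbital_def closed_subgroup_def by auto
  have Kc: "K \<subseteq> carrier G" using Ksub subgroup.subset by auto
  define Fam where "Fam = {H. orbital G T H \<and> K \<subseteq> H \<and> finite_index_in G K H}"
  have "(\<lambda>h. K #> h) ` K \<subseteq> {K}" using coset_join2[OF _ Ksub] Kc by auto
  then have fKK: "finite_index_in G K K" unfolding finite_index_in_def by (rule finite_subset) simp
  then have "K \<in> Fam" unfolding Fam_def using K by auto
  then have ne: "Fam \<noteq> {}" by auto
  have cl: "\<forall>H\<in>Fam. closed_subgroup G T H" unfolding Fam_def orbital_def by auto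
  obtain Mx where Mx: "Mx \<in> Fam" and maxl: "\<forall>H\<in>Fam. Mx \<subseteq> H \<longrightarrow> H = Mx"
    using mx[unfolded max_closed_subgroups_def, rule_format, OF conjI[OF ne cl]] by auto
  have Mxo: "orbital G T Mx" and KMx: "K \<subseteq> Mx" and fKMx: "finite_index_in G K Mx"
    using Mx unfolding Fam_def by auto
  have Mxsub: "subgroup Mx G" using Mxo unfolding orbital_def closed_subgroup_def by auto
  have "isolated_orbital G T Mx"
    unfolding isolated_orbital_def
  proof (intro conjI allI impI Mxo)
    fix H' assume H': "orbital G T H' \<and> Mx \<subset> H'"
    show "\<not> finite_index_in G Mx H'"
    proof
      assume f: "finite_index_in G Mx H'"
      have H'sub: "subgroup H' G" using H' unfolding orbital_def closed_subgroup_def by auto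
      have "finite_index_in G K H'" using fi_trans[OF Ksub Mxsub H'sub KMx _ fKMx f] H' by auto
      then have "H' \<in> Fam" unfolding Fam_def using H' KMx by auto
      then have "H' = Mx" using maxl H' by auto
      then show False using H' by auto
    qed
  qed
  then have MxN: "Mx \<lhd> G" using I by auto
  define C where "C = (\<lambda>g. g <# K #> inv g) ` carrier G"
  have finC: "finite C" unfolding C_def using finite_conjugates[OF TG cpt Ksub Kop] .
  have KC: "K \<in> C" unfolding C_def using conj_one[OF Kc] one_closed by (intro rev_image_eqI) auto
  have Csub: "\<And>A. A \<in> C \<Longrightarrow> subgroup A G" unfolding C_def using conj_subgroup[OF Ksub] by auto
  define N where "N = \<Inter>C"
  have NK: "N \<subseteq> K" unfolding N_def using KC by auto
  have Nsub: "subgroup N G" unfolding N_def using subgroups_Inter[of C] Csub KC by auto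
  have Nnormal: "N \<lhd> G"
    unfolding normal_inv_iff
  proof (intro conjI ballI Nsub)
    fix x n assume x: "x \<in> carrier G" and n: "n \<in> N"
    show "x \<otimes> n \<otimes> inv x \<in> N" unfolding N_def
    proof
      fix A assume "A \<in> C"
      then obtain g where g: "g \<in> carrier G" "A = g <# K #> inv g" unfolding C_def by auto
      have xg: "inv x \<otimes> g \<in> carrier G" using x g by simp
      have B: "(inv x \<otimes> g) <# K #> inv (inv x \<otimes> g) \<in> C" unfolding C_def using xg by auto
      then have nB: "n \<in> (inv x \<otimes> g) <# K #> inv (inv x \<otimes> g)" using n unfolding N_def by auto
      have Bc: "(inv x \<otimes> g) <# K #> inv (inv x \<otimes> g) \<subseteq> carrier G" using conj_subset[OF Kc xg] .
      have "x \<otimes> n \<otimes> inv x \<in> x <# ((inv x \<otimes> g) <# K #> inv (inv x \<otimes> g)) #> inv x"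
        unfolding conj_img[OF Bc x] using nB by (rule imageI)
      also have "\<dots> = (x \<otimes> (inv x \<otimes> g)) <# K #> inv (x \<otimes> (inv x \<otimes> g))"
        using conj_conj[OF Kc x xg] .
      also have "\<dots> = A" using x g by simp
      finally show "x \<otimes> n \<otimes> inv x \<in> A" .
    qed
  qed
  have "\<And>A. A \<in> C \<Longrightarrow> finite_index_in G A Mx"
    unfolding C_def using fi_conj[OF Ksub MxN fKMx] by auto
  moreover have "C \<noteq> {}" using KC by auto
  moreover have "Mx \<subseteq> carrier G" using Mxsub subgroup.subset by auto
  ultimately have "finite_index_in G N Mx" unfolding N_def
    using fi_Inter[OF finC _ Csub] by auto
  moreover have "(\<lambda>k. N #> k) ` K \<subseteq> (\<lambda>h. N #> h) ` Mx" using KMx by auto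
  ultimately have "finite_index_in G N K" unfolding finite_index_in_def using finite_subset by auto
  then show ?thesis using NK Nsub Nnormal by auto
qed

end

context group begin

lemma dirB:
  assumes TG: "topological_group G T" and cpt: "compact_space T"
    and II: "\<forall>K. orbital G T K \<longrightarrow> (\<exists>N. N \<subseteq> K \<and> subgroup N G \<and> finite_index_in G N K \<and> N \<lhd> G)"
    and Hi: "isolated_orbital G T H"
  shows "H \<lhd> G"
proof -
  have top: "topspace T = carrier G" using TG unfolding topological_group_def by auto
  have Ho: "orbital G T H" using Hi unfolding isolated_orbital_def by auto
  have Hsub: "subgroup H G" and Hcl: "closedin T H" and Hop: "openin T (normalizer G H)"
    using Ho unfolding orbital_def closed_subgroup_def by auto
  have Hc: "H \<subseteq> carrier G" using Hsub subgroup.subset by auto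
  obtain N where NH: "N \<subseteq> H" and Nsub: "subgroup N G" and fNH: "finite_index_in G N H"
    and Nn: "N \<lhd> G" using II Ho by blast
  interpret Nn: normal N G using Nn .
  define Q where "Q = G Mod N"
  have Qg: "group Q" unfolding Q_def using Nn.factorgroup_is_group .
  have carQ: "carrier Q = (\<lambda>x. N #> x) ` carrier G" unfolding Q_def by (rule carrier_FactGroup)
  have mulQ: "(N #> x) \<otimes>\<^bsub>Q\<^esub> (N #> y) = N #> (x \<otimes> y)" if "x \<in> carrier G" "y \<in> carrier G" for x y
    unfolding Q_def using Nn.rcos_sum[OF that] by simp
  have invQ: "inv\<^bsub>Q\<^esub> (N #> x) = N #> inv x" if x: "x \<in> carrier G" for x
  proof -
    have "N #> x \<in> carrier (G Mod N)" using carrier_FactGroup x by auto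
    then show ?thesis unfolding Q_def using Nn.inv_FactGroup Nn.rcos_inv[OF x] by simp
  qed
  have powQ: "(N #> x) [^]\<^bsub>Q\<^esub> (n::nat) = N #> (x [^] n)" if x: "x \<in> carrier G" for x n
    unfolding Q_def using Nn.FactGroup_pow[OF x] by simp
  define C where "C = (\<lambda>g. g <# H #> inv g) ` carrier G"
  have finC: "finite C" unfolding C_def using finite_conjugates[OF TG cpt Hsub Hop] .
  have HC: "H \<in> C" unfolding C_def using conj_one[OF Hc] one_closed by (intro rev_image_eqI) auto
  have Csub: "\<And>A. A \<in> C \<Longrightarrow> subgroup A G" unfolding C_def using conj_subgroup[OF Hsub] by auto
  have Cc: "\<And>A. A \<in> C \<Longrightarrow> A \<subseteq> carrier G" using Csub subgroup.subset by auto
  define Sb where "Sb = (\<Union>A\<in>C. (\<lambda>x. N #> x) ` A)"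
  have SbQ: "Sb \<subseteq> carrier Q" unfolding Sb_def carQ using Cc by auto
  have finSb: "finite Sb" unfolding Sb_def
  proof (intro finite_UN_I finC)
    fix A assume "A \<in> C"
    then obtain g where g: "g \<in> carrier G" "A = g <# H #> inv g" unfolding C_def by auto
    have "(\<lambda>x. N #> x) ` A = (\<lambda>x. N #> (g \<otimes> x \<otimes> inv g)) ` H"
      using g conj_img[OF Hc g(1)] by (simp add: image_image)
    also have "\<dots> = (\<lambda>Z. (N #> g) \<otimes>\<^bsub>Q\<^esub> Z \<otimes>\<^bsub>Q\<^esub> (N #> inv g)) ` ((\<lambda>h. N #> h) ` H)"
      unfolding image_image using g Hc by (intro image_cong) (auto simp: mulQ)
    finally show "finite ((\<lambda>x. N #> x) ` A)" using fNH unfolding finite_index_in_def by simp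
  qed
  have invSb: "\<forall>s\<in>Sb. inv\<^bsub>Q\<^esub> s \<in> Sb"
  proof
    fix s assume "s \<in> Sb"
    then obtain A a where A: "A \<in> C" "a \<in> A" "s = N #> a" unfolding Sb_def by auto
    have "a \<in> carrier G" using A Cc by auto
    then have "inv\<^bsub>Q\<^esub> s = N #> inv a" using A invQ by simp
    moreover have "inv a \<in> A" using subgroup.m_inv_closed[OF Csub[OF A(1)] A(2)] .
    ultimately show "inv\<^bsub>Q\<^esub> s \<in> Sb" unfolding Sb_def using A(1) by auto
  qed
  have powSb: "\<forall>s\<in>Sb. \<forall>n::nat. s [^]\<^bsub>Q\<^esub> n \<in> Sb"
  proof (intro ballI allI)
    fix s and n :: nat assume "s \<in> Sb"
    then obtain A a where A: "A \<in> C" "a \<in> A" "s = N #> a" unfolding Sb_def by auto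
    have "a \<in> carrier G" using A Cc by auto
    then have "s [^]\<^bsub>Q\<^esub> n = N #> (a [^] n)" using A powQ by simp
    moreover have "a [^] n \<in> A" using subgroup_pow_closed[OF Csub[OF A(1)] A(2)] .
    ultimately show "s [^]\<^bsub>Q\<^esub> n \<in> Sb" unfolding Sb_def using A(1) by auto
  qed
  have conjSb: "\<forall>z\<in>carrier Q. \<forall>s\<in>Sb. z \<otimes>\<^bsub>Q\<^esub> s \<otimes>\<^bsub>Q\<^esub> inv\<^bsub>Q\<^esub> z \<in> Sb"
  proof (intro ballI)
    fix z s assume z: "z \<in> carrier Q" and "s \<in> Sb"
    then obtain A a where A: "A \<in> C" "a \<in> A" "s = N #> a" unfolding Sb_def by auto
    obtain g where g: "g \<in> carrier G" "z = N #> g" using z carQ by auto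
    obtain k where k: "k \<in> carrier G" "A = k <# H #> inv k" using A(1) unfolding C_def by auto
    have ac: "a \<in> carrier G" using A Cc by auto
    have "z \<otimes>\<^bsub>Q\<^esub> s \<otimes>\<^bsub>Q\<^esub> inv\<^bsub>Q\<^esub> z = N #> (g \<otimes> a \<otimes> inv g)"
      using g ac A(3) by (simp add: invQ mulQ)
    moreover have "g \<otimes> a \<otimes> inv g \<in> g <# A #> inv g"
      using conj_img[OF Cc[OF A(1)] g(1)] A(2) by simp
    moreover have "g <# A #> inv g = (g \<otimes> k) <# H #> inv (g \<otimes> k)"
      using k conj_conj[OF Hc g(1) k(1)] by simp
    moreover have "(g \<otimes> k) <# H #> inv (g \<otimes> k) \<in> C" unfolding C_def using g k by auto
    ultimately show "z \<otimes>\<^bsub>Q\<^esub> s \<otimes>\<^bsub>Q\<^esub> inv\<^bsub>Q\<^esub> z \<in> Sb" unfolding Sb_def by auto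
  qed
  have finGen: "finite (generate Q Sb)"
    using group.dietzmann[OF Qg SbQ finSb invSb powSb conjSb] .
  have genSub: "subgroup (generate Q Sb) Q" using group.generate_is_subgroup[OF Qg SbQ] .
  define H' where "H' = {x \<in> carrier G. N #> x \<in> generate Q Sb}"
  have H'sub: "subgroup H' G"
  proof (rule subgroupI)
    show "H' \<subseteq> carrier G" unfolding H'_def by auto
    have Nc: "N \<subseteq> carrier G" using Nsub subgroup.subset by auto
    have "N #> \<one> = \<one>\<^bsub>Q\<^esub>" unfolding Q_def one_FactGroup using coset_mult_one[OF Nc] .
    then have "\<one> \<in> H'" unfolding H'_def using generate.one[of Q Sb] by simp
    then show "H' \<noteq> {}" by auto
  next
    fix a assume a: "a \<in> H'"
    then have "inv\<^bsub>Q\<^esub> (N #> a) \<in> generate Q Sb"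
      unfolding H'_def using subgroup.m_inv_closed[OF genSub] by auto
    then show "inv a \<in> H'" unfolding H'_def using a invQ unfolding H'_def by auto
  next
    fix a b assume a: "a \<in> H'" and b: "b \<in> H'"
    then have "(N #> a) \<otimes>\<^bsub>Q\<^esub> (N #> b) \<in> generate Q Sb"
      unfolding H'_def using subgroup.m_closed[OF genSub] by auto
    then show "a \<otimes> b \<in> H'" using a b mulQ unfolding H'_def by auto
  qed
  have HH': "H \<subseteq> H'"
  proof
    fix h assume h: "h \<in> H"
    have "N #> h \<in> Sb" unfolding Sb_def using HC h by auto
    then show "h \<in> H'" unfolding H'_def using h Hc generate.incl[of _ Sb Q] by auto
  qed
  have H'n: "H' \<lhd> G"
    unfolding normal_inv_iff
  proof (intro conjI ballI H'sub)
    fix g x assume g: "g \<in> carrier G" and x: "x \<in> H'"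
    have xc: "x \<in> carrier G" using x unfolding H'_def by auto
    have "N #> g \<in> carrier Q" using g carQ by auto
    then have "(N #> g) \<otimes>\<^bsub>Q\<^esub> (N #> x) \<otimes>\<^bsub>Q\<^esub> inv\<^bsub>Q\<^esub> (N #> g) \<in> generate Q Sb"
      using group.gen_conj[OF Qg SbQ conjSb] x unfolding H'_def by auto
    moreover have "(N #> g) \<otimes>\<^bsub>Q\<^esub> (N #> x) \<otimes>\<^bsub>Q\<^esub> inv\<^bsub>Q\<^esub> (N #> g) = N #> (g \<otimes> x \<otimes> inv g)"
      using g xc by (simp add: invQ mulQ)
    ultimately show "g \<otimes> x \<otimes> inv g \<in> H'" unfolding H'_def using g xc by auto
  qed
  have cosH: "H #> x = H <#> (N #> x)" if x: "x \<in> carrier G" for x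
  proof -
    have "H <#> (N #> x) = (H <#> N) #> x" using setmult_rcos_assoc[OF Hc _ x] Nsub subgroup.subset by auto
    then show ?thesis using setmult_subgroup_eq[OF Hsub Nsub NH] by simp
  qed
  have "(\<lambda>x. H #> x) ` H' = (\<lambda>Z. H <#> Z) ` ((\<lambda>x. N #> x) ` H')"
    unfolding image_image using cosH unfolding H'_def by auto
  moreover have "(\<lambda>x. N #> x) ` H' \<subseteq> generate Q Sb" unfolding H'_def by auto
  ultimately have fHH': "finite_index_in G H H'"
    unfolding finite_index_in_def using finGen finite_subset by (metis finite_imageI)
  have "H' = \<Union>((\<lambda>x. H #> x) ` H')"
  proof
    show "H' \<subseteq> \<Union>((\<lambda>x. H #> x) ` H')"
    proof
      fix x assume x: "x \<in> H'"
      then have "x \<in> H #> x" using rcos_self[OF _ Hsub] unfolding H'_def by auto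
      then show "x \<in> \<Union>((\<lambda>x. H #> x) ` H')" using x by auto
    qed
    show "\<Union>((\<lambda>x. H #> x) ` H') \<subseteq> H'"
    proof
      fix y assume "y \<in> \<Union>((\<lambda>x. H #> x) ` H')"
      then obtain x h where xh: "x \<in> H'" "h \<in> H" "y = h \<otimes> x" unfolding r_coset_def by auto
      then show "y \<in> H'" using subgroup.m_closed[OF H'sub] HH' by auto
    qed
  qed
  moreover have "closedin T (\<Union>((\<lambda>x. H #> x) ` H'))"
  proof (rule closedin_Union)
    show "finite ((\<lambda>x. H #> x) ` H')" using fHH' unfolding finite_index_in_def .
    show "\<And>Z. Z \<in> (\<lambda>x. H #> x) ` H' \<Longrightarrow> closedin T Z"
      using rcos_closedin[OF TG Hsub Hcl] unfolding H'_def by auto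
  qed
  ultimately have H'cl: "closedin T H'" by simp
  have "orbital G T H'"
    unfolding orbital_def closed_subgroup_def normal_normalizer[OF H'n]
    using H'sub H'cl openin_topspace[of T] top by auto
  then have "\<not> H \<subset> H'" using Hi fHH' unfolding isolated_orbital_def by auto
  then have "H = H'" using HH' by auto
  then show ?thesis using H'n by simp
qed

end

theorem lemma1p13:
  fixes G :: "('a, 'b) monoid_scheme" and T :: "'a topology"
  assumes "profinite_group G T"
    and "max_closed_subgroups G T"
  shows "(\<forall>H. isolated_orbital G T H \<longrightarrow> H \<lhd> G) \<longleftrightarrow>
         (\<forall>K. orbital G T K \<longrightarrow>
              (\<exists>N. N \<subseteq> K \<and> subgroup N G \<and> finite_index_in G N K \<and> N \<lhd> G))"
proof -
  have TG: "topological_group G T" and cpt: "compact_space T"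
    using assms(1) unfolding profinite_group_def by auto
  interpret group G using topgrp_group[OF TG] .
  show ?thesis
  proof
    assume I: "\<forall>H. isolated_orbital G T H \<longrightarrow> H \<lhd> G"
    show "\<forall>K. orbital G T K \<longrightarrow> (\<exists>N. N \<subseteq> K \<and> subgroup N G \<and> finite_index_in G N K \<and> N \<lhd> G)"
      using dirA[OF TG cpt assms(2) I] by auto
  next
    assume II: "\<forall>K. orbital G T K \<longrightarrow> (\<exists>N. N \<subseteq> K \<and> subgroup N G \<and> finite_index_in G N K \<and> N \<lhd> G)"
    show "\<forall>H. isolated_orbital G T H \<longrightarrow> H \<lhd> G"
      using dirB[OF TG cpt II] by auto
  qed
qed


end
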